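(* Let $(H,L_H)$ be a right-resolving labeled graph presenting a sofic shift $Y$. Then $(H,L_H)$ is regular if and only if the set $\mathcal R(L_H)$ of regular rays is dense in $X_H$.
   Context: A labeled graph $(H,L_H)$: finite directed graph (vertices $V_H$, edges $E_H$, source/terminal maps $s_H,t_H$) without sinks or sources, labeling $L_H:E_H\to A$, edge shift $X_H$; $L_H$ acts coordinatewise; $Y=L_H(X_H)$. Right-resolving: distinct edges with the same source have distinct labels. $f_H(v)=\{L_H(x): x$ a right-infinite path starting at $v\}$; for $y\in Y$, $F(y)=\{w\in Y[0,\infty): y_{(-\infty,-1]}w\in Y\}$ with $Y[0,\infty)=\{y_{[0,\infty)}:y\in Y\}$. A vertex $v$ is regular if there is $z\in X_H$ whose edge $z_{-1}$ ends at $v$ with $f_H(v)=F(L_H(z))$; $(H,L_H)$ is regular if all vertices are regular. For $x\in X_H$, $\mathbb U(x)=\{z\in X_H:\exists N\ \forall i\le N,\ z_i=x_i\}$ (similarly in $Y$); $x$ is a regular ray if $L_H$ maps $\mathbb U(x)$ onto $\mathbb U(L_H(x))$; $\mathcal R(L_H)$ is the set of regular rays. *)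

theory Defs
  imports "HOL-Analysis.Analysis"
begin

definition labeled_graph ::
  "'v set \<Rightarrow> 'e set \<Rightarrow> ('e \<Rightarrow> 'v) \<Rightarrow> ('e \<Rightarrow> 'v) \<Rightarrow> bool" where
  "labeled_graph V E s t \<longleftrightarrow> finite V \<and> finite E \<and>
     (\<forall>e\<in>E. s e \<in> V \<and> t e \<in> V) \<and>
     (\<forall>v\<in>V. (\<exists>e\<in>E. s e = v) \<and> (\<exists>e\<in>E. t e = v))"

definition edge_shift :: "'e set \<Rightarrow> ('e \<Rightarrow> 'v) \<Rightarrow> ('e \<Rightarrow> 'v) \<Rightarrow> (int \<Rightarrow> 'e) set" where
  "edge_shift E s t = {x. \<forall>i. x i \<in> E \<and> t (x i) = s (x (i + 1))}"

definition lab :: "('e \<Rightarrow> 'a) \<Rightarrow> (int \<Rightarrow> 'e) \<Rightarrow> (int \<Rightarrow> 'a)" where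
  "lab L x = (\<lambda>i. L (x i))"

definition sofic :: "'e set \<Rightarrow> ('e \<Rightarrow> 'v) \<Rightarrow> ('e \<Rightarrow> 'v) \<Rightarrow> ('e \<Rightarrow> 'a) \<Rightarrow> (int \<Rightarrow> 'a) set" where
  "sofic E s t L = lab L ` edge_shift E s t"

definition right_resolving :: "'e set \<Rightarrow> ('e \<Rightarrow> 'v) \<Rightarrow> ('e \<Rightarrow> 'a) \<Rightarrow> bool" where
  "right_resolving E s L \<longleftrightarrow>
     (\<forall>e1\<in>E. \<forall>e2\<in>E. e1 \<noteq> e2 \<and> s e1 = s e2 \<longrightarrow> L e1 \<noteq> L e2)"

definition follower_vertex ::
  "'e set \<Rightarrow> ('e \<Rightarrow> 'v) \<Rightarrow> ('e \<Rightarrow> 'v) \<Rightarrow> ('e \<Rightarrow> 'a) \<Rightarrow> 'v \<Rightarrow> (nat \<Rightarrow> 'a) set" where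
  "follower_vertex E s t L v =
     {(\<lambda>n. L (x n)) | x. (\<forall>n. x n \<in> E \<and> t (x n) = s (x (Suc n))) \<and> s (x 0) = v}"

definition right_rays :: "(int \<Rightarrow> 'a) set \<Rightarrow> (nat \<Rightarrow> 'a) set" where
  "right_rays Y = {(\<lambda>n. y (int n)) | y. y \<in> Y}"

definition glue :: "(int \<Rightarrow> 'a) \<Rightarrow> (nat \<Rightarrow> 'a) \<Rightarrow> (int \<Rightarrow> 'a)" where
  "glue y w = (\<lambda>i. if i < 0 then y i else w (nat i))"

definition follower_seq :: "(int \<Rightarrow> 'a) set \<Rightarrow> (int \<Rightarrow> 'a) \<Rightarrow> (nat \<Rightarrow> 'a) set" where
  "follower_seq Y y = {w \<in> right_rays Y. glue y w \<in> Y}"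

definition regular_vertex ::
  "'e set \<Rightarrow> ('e \<Rightarrow> 'v) \<Rightarrow> ('e \<Rightarrow> 'v) \<Rightarrow> ('e \<Rightarrow> 'a) \<Rightarrow> 'v \<Rightarrow> bool" where
  "regular_vertex E s t L v \<longleftrightarrow>
     (\<exists>z \<in> edge_shift E s t. t (z (-1)) = v \<and>
        follower_vertex E s t L v = follower_seq (sofic E s t L) (lab L z))"

definition regular_graph ::
  "'v set \<Rightarrow> 'e set \<Rightarrow> ('e \<Rightarrow> 'v) \<Rightarrow> ('e \<Rightarrow> 'v) \<Rightarrow> ('e \<Rightarrow> 'a) \<Rightarrow> bool" where
  "regular_graph V E s t L \<longleftrightarrow> (\<forall>v\<in>V. regular_vertex E s t L v)"

definition left_asym :: "(int \<Rightarrow> 'b) set \<Rightarrow> (int \<Rightarrow> 'b) \<Rightarrow> (int \<Rightarrow> 'b) set" where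
  "left_asym S x = {z \<in> S. \<exists>N. \<forall>i\<le>N. z i = x i}"

definition regular_ray ::
  "'e set \<Rightarrow> ('e \<Rightarrow> 'v) \<Rightarrow> ('e \<Rightarrow> 'v) \<Rightarrow> ('e \<Rightarrow> 'a) \<Rightarrow> (int \<Rightarrow> 'e) \<Rightarrow> bool" where
  "regular_ray E s t L x \<longleftrightarrow>
     lab L ` left_asym (edge_shift E s t) x = left_asym (sofic E s t L) (lab L x)"

definition regular_rays ::
  "'e set \<Rightarrow> ('e \<Rightarrow> 'v) \<Rightarrow> ('e \<Rightarrow> 'v) \<Rightarrow> ('e \<Rightarrow> 'a) \<Rightarrow> (int \<Rightarrow> 'e) set" where
  "regular_rays E s t L = {x \<in> edge_shift E s t. regular_ray E s t L x}"

definition shift_topology :: "'e set \<Rightarrow> (int \<Rightarrow> 'e) topology" where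
  "shift_topology E = product_topology (\<lambda>_. discrete_topology E) UNIV"

definition dense_in_shift :: "'e set \<Rightarrow> (int \<Rightarrow> 'e) set \<Rightarrow> (int \<Rightarrow> 'e) set \<Rightarrow> bool" where
  "dense_in_shift E X D \<longleftrightarrow> D \<subseteq> X \<and> (subtopology (shift_topology E) X) closure_of D = X"

end

theory Submission
  imports Defs
begin

locale LG =
  fixes V :: "'v set" and E :: "'e set" and s t :: "'e \<Rightarrow> 'v" and L :: "'e \<Rightarrow> 'a"
  assumes lg: "labeled_graph V E s t" and rr: "right_resolving E s L"
begin

abbreviation XH where "XH \<equiv> edge_shift E s t"
abbreviation Y where "Y \<equiv> sofic E s t L"
definition rp :: "(nat \<Rightarrow> 'e) \<Rightarrow> bool" where
  "rp p \<longleftrightarrow> (\<forall>k. p k \<in> E \<and> t (p k) = s (p (Suc k)))"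

lemma XH_iff: "x \<in> XH \<longleftrightarrow> (\<forall>i. x i \<in> E \<and> t (x i) = s (x (i+1)))"
  by (simp add: edge_shift_def)

lemma rrD: "e1 \<in> E \<Longrightarrow> e2 \<in> E \<Longrightarrow> s e1 = s e2 \<Longrightarrow> L e1 = L e2 \<Longrightarrow> e1 = e2"
  using rr unfolding right_resolving_def by blast

lemma finE: "finite E" and finV: "finite V"
  using lg unfolding labeled_graph_def by auto

lemma sV: "e \<in> E \<Longrightarrow> s e \<in> V" and tV: "e \<in> E \<Longrightarrow> t e \<in> V"
  using lg unfolding labeled_graph_def by auto

lemma outE: "v \<in> V \<Longrightarrow> \<exists>e\<in>E. s e = v" and inE: "v \<in> V \<Longrightarrow> \<exists>e\<in>E. t e = v"
  using lg unfolding labeled_graph_def by auto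

lemma fv_iff: "w \<in> follower_vertex E s t L v \<longleftrightarrow> (\<exists>p. rp p \<and> s (p 0) = v \<and> w = (\<lambda>n. L (p n)))"
  unfolding follower_vertex_def rp_def by auto

lemma koenig:
  fixes c :: "int \<Rightarrow> 'a"
  assumes H: "\<forall>n::nat. \<exists>q\<in>XH. t (q (-1)) = v \<and> (\<forall>j. - int n \<le> j \<and> j < 0 \<longrightarrow> L (q j) = c j)"
  shows "\<exists>l. (\<forall>j<0. l j \<in> E \<and> L (l j) = c j) \<and> (\<forall>j< -1. t (l j) = s (l (j+1))) \<and> t (l (-1)) = v"
proof -
  define good where "good = (\<lambda>(k::nat) v. \<forall>n::nat. \<exists>q\<in>XH. t (q (- int k - 1)) = v \<and>
      (\<forall>j. - int k - int n \<le> j \<and> j < - int k \<longrightarrow> L (q j) = c j))"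
  have step: "\<exists>e. e\<in>E \<and> t e = w \<and> L e = c (- int k - 1) \<and> good (Suc k) (s e)"
    if gw: "good k w" for k w
  proof (rule ccontr)
    assume nex: "\<not> ?thesis"
    define A where "A = {e\<in>E. t e = w \<and> L e = c (- int k - 1)}"
    have finA: "finite A" using finE unfolding A_def by auto
    have "\<forall>e\<in>A. \<exists>n::nat. \<forall>q\<in>XH. t (q (- int (Suc k) - 1)) = s e \<longrightarrow>
        \<not> (\<forall>j. - int (Suc k) - int n \<le> j \<and> j < - int (Suc k) \<longrightarrow> L (q j) = c j)"
      using nex unfolding A_def good_def by blast
    then obtain nf where nf: "\<And>e q. e\<in>A \<Longrightarrow> q\<in>XH \<Longrightarrow> t (q (- int (Suc k) - 1)) = s e \<Longrightarrow>
        \<not> (\<forall>j. - int (Suc k) - int (nf e) \<le> j \<and> j < - int (Suc k) \<longrightarrow> L (q j) = c j)"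
      by metis
    define M where "M = Suc (Max (nf ` A))"
    obtain q where q: "q \<in> XH" "t (q (- int k - 1)) = w"
      and ql: "\<And>j. - int k - int M \<le> j \<Longrightarrow> j < - int k \<Longrightarrow> L (q j) = c j"
      using gw unfolding good_def by blast
    define e where "e = q (- int k - 1)"
    have qE: "\<And>i. q i \<in> E" and qc: "\<And>i. t (q i) = s (q (i+1))" using q(1) XH_iff by auto
    have "e \<in> A" unfolding A_def e_def using qE q(2) ql[of "- int k - 1"] M_def by auto
    have le: "nf e + 1 \<le> M" using Max_ge[OF finite_imageI[OF finA], of "nf e"] \<open>e\<in>A\<close> M_def by auto
    have "t (q (- int (Suc k) - 1)) = s e"
    proof -
      have "- int (Suc k) - 1 + 1 = - int k - 1" by simp
      then show ?thesis using qc[of "- int (Suc k) - 1"] unfolding e_def by metis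
    qed
    moreover have "\<forall>j. - int (Suc k) - int (nf e) \<le> j \<and> j < - int (Suc k) \<longrightarrow> L (q j) = c j"
      using ql le by auto
    ultimately show False using nf[OF \<open>e\<in>A\<close> q(1)] by blast
  qed
  define nxt where "nxt = (\<lambda>k w. SOME e. e\<in>E \<and> t e = w \<and> L e = c (- int k - 1) \<and> good (Suc k) (s e))"
  define vtx where "vtx = rec_nat v (\<lambda>k w. s (nxt k w))"
  have vtx0: "vtx 0 = v" and vtxS: "\<And>k. vtx (Suc k) = s (nxt k (vtx k))" unfolding vtx_def by simp_all
  have nxtP: "nxt k w \<in> E \<and> t (nxt k w) = w \<and> L (nxt k w) = c (- int k - 1) \<and> good (Suc k) (s (nxt k w))"
    if "good k w" for k w
    unfolding nxt_def using someI_ex[OF step[OF that]] .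
  have gv: "good k (vtx k)" for k
  proof (induction k)
    case 0
    then show ?case using H unfolding good_def vtx0 by simp
  next
    case (Suc k)
    then show ?case using nxtP[OF Suc] vtxS by simp
  qed
  define l where "l = (\<lambda>j::int. nxt (nat (-j-1)) (vtx (nat (-j-1))))"
  have A: "\<forall>j<0. l j \<in> E \<and> L (l j) = c j"
  proof (intro allI impI)
    fix j :: int assume "j < 0"
    then have "- int (nat (-j-1)) - 1 = j" by simp
    then show "l j \<in> E \<and> L (l j) = c j" using nxtP[OF gv, of "nat (-j-1)"] unfolding l_def by simp
  qed
  have B: "\<forall>j< -1. t (l j) = s (l (j+1))"
  proof (intro allI impI)
    fix j :: int assume "j < -1"
    then have "nat (-j-1) = Suc (nat (-(j+1)-1))" by simp
    then show "t (l j) = s (l (j+1))" unfolding l_def using nxtP[OF gv] vtxS by metis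
  qed
  have C: "t (l (-1)) = v" unfolding l_def using nxtP[OF gv, of 0] vtx0 by simp
  show ?thesis using A B C by blast
qed


lemma glue_point:
  assumes l: "\<forall>j<0. l j \<in> E" "\<forall>j< -1. t (l j) = s (l (j+1))" and p: "rp p" and lp: "t (l (-1)) = s (p 0)"
  shows "(\<lambda>j. if j < 0 then l j else p (nat j)) \<in> XH"
  unfolding XH_iff
proof (intro allI)
  fix i :: int
  consider "i < -1" | "i = -1" | "i \<ge> 0" by linarith
  then show "(if i < 0 then l i else p (nat i)) \<in> E \<and>
      t (if i < 0 then l i else p (nat i)) = s (if i + 1 < 0 then l (i + 1) else p (nat (i + 1)))"
  proof cases
    case 1 then show ?thesis using l by auto
  next
    case 2 then show ?thesis using l lp by auto
  next
    case 3
    then have "nat (i+1) = Suc (nat i)" by simp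
    then show ?thesis using p 3 unfolding rp_def by auto
  qed
qed

lemma locality:
  assumes z0: "z0 \<in> XH" and fs: "follower_seq Y (lab L z0) \<subseteq> follower_vertex E s t L u"
  shows "\<exists>N. \<forall>m\<ge>N. \<forall>z\<in>XH. (\<forall>j. - int m \<le> j \<and> j < 0 \<longrightarrow> L (z j) = L (z0 j)) \<longrightarrow>
            (\<exists>p. rp p \<and> s (p 0) = u \<and> (\<forall>k. L (p k) = L (z (int k))))"
proof -
  define T where "T = (\<lambda>n::nat. {v. \<exists>q\<in>XH. t (q (-1)) = v \<and> (\<forall>j. - int n \<le> j \<and> j < 0 \<longrightarrow> L (q j) = L (z0 j))})"
  have TV: "T n \<subseteq> V" for n unfolding T_def using tV XH_iff by blast
  have finT: "finite (T n)" for n using TV finV finite_subset by blast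
  have monoT: "n \<le> m \<Longrightarrow> T m \<subseteq> T n" for n m unfolding T_def by force
  obtain N where N: "\<forall>n. card (T N) \<le> card (T n)"
    using ex_has_least_nat[of "\<lambda>_. True" 0 "\<lambda>n. card (T n)"] by auto
  have stab: "T n = T N" if "N \<le> n" for n
  proof -
    have "card (T n) \<le> card (T N)" by (rule card_mono[OF finT monoT[OF that]])
    moreover have "card (T N) \<le> card (T n)" using N by blast
    ultimately have "card (T n) = card (T N)" by (rule le_antisym)
    then show ?thesis by (rule card_subset_eq[OF finT monoT[OF that]])
  qed
  have allT: "v \<in> T n" if "v \<in> T N" for v n
  proof (cases "n \<le> N")
    case True then show ?thesis using monoT that by blast
  next
    case False
    then have "T n = T N" by (intro stab) simp
    then show ?thesis using that by simp
  qed
  have key: "follower_vertex E s t L v \<subseteq> follower_seq Y (lab L z0)" if v: "v \<in> T N" for v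
  proof
    fix w assume "w \<in> follower_vertex E s t L v"
    then obtain p where p: "rp p" "s (p 0) = v" and w: "w = (\<lambda>n. L (p n))" unfolding fv_iff by blast
    have "\<forall>n::nat. \<exists>q\<in>XH. t (q (-1)) = v \<and> (\<forall>j. - int n \<le> j \<and> j < 0 \<longrightarrow> L (q j) = L (z0 j))"
      using allT[OF v] unfolding T_def by blast
    from koenig[OF this] obtain l where l: "\<forall>j<0. l j \<in> E \<and> L (l j) = L (z0 j)"
      "\<forall>j< -1. t (l j) = s (l (j+1))" "t (l (-1)) = v" by blast
    define q where "q = (\<lambda>j. if j < 0 then l j else p (nat j))"
    have qX: "q \<in> XH" unfolding q_def using glue_point l p by auto
    have lq: "lab L q = glue (lab L z0) w"
      unfolding lab_def glue_def q_def w using l by auto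
    have "lab L q \<in> Y" unfolding sofic_def using qX by blast
    moreover have "w = (\<lambda>n. lab L q (int n))" unfolding lq glue_def by auto
    ultimately have "w \<in> right_rays Y" unfolding right_rays_def by blast
    then show "w \<in> follower_seq Y (lab L z0)"
      unfolding follower_seq_def using lq \<open>lab L q \<in> Y\<close> by simp
  qed
  show ?thesis
  proof (intro exI[of _ N] allI impI ballI)
    fix m z assume m: "N \<le> m" and z: "z \<in> XH" and ag: "\<forall>j. - int m \<le> j \<and> j < 0 \<longrightarrow> L (z j) = L (z0 j)"
    have "t (z (-1)) \<in> T N" unfolding T_def using z ag m by force
    moreover have zz: "\<And>i. z i \<in> E \<and> t (z i) = s (z (i+1))" using z XH_iff by auto
    have "rp (\<lambda>k. z (int k))" unfolding rp_def using zz by (simp add: add.commute)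
    moreover have "s (z (int 0)) = t (z (-1))" using zz[of "-1"] by simp
    ultimately have "(\<lambda>k. L (z (int k))) \<in> follower_vertex E s t L (t (z (-1)))"
      unfolding fv_iff by (intro exI[of _ "\<lambda>k. z (int k)"]) simp
    then have "(\<lambda>k. L (z (int k))) \<in> follower_vertex E s t L u"
      using key[OF \<open>t (z (-1)) \<in> T N\<close>] fs by blast
    then show "\<exists>p. rp p \<and> s (p 0) = u \<and> (\<forall>k. L (p k) = L (z (int k)))" unfolding fv_iff by metis
  qed
qed

definition Qw where "Qw y i n \<longleftrightarrow> (\<forall>z\<in>XH. (\<forall>j. i - int n \<le> j \<and> j < i \<longrightarrow> L (z j) = L (y j)) \<longrightarrow>
   (\<exists>p. rp p \<and> s (p 0) = s (y i) \<and> (\<forall>m. L (p m) = L (z (i + int m)))))"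

lemma Qw_step:
  assumes y: "y \<in> XH" and Q: "Qw y i n" shows "Qw y (i+1) (Suc n)"
  unfolding Qw_def
proof (intro ballI impI)
  fix z assume z: "z \<in> XH" and ag: "\<forall>j. i + 1 - int (Suc n) \<le> j \<and> j < i + 1 \<longrightarrow> L (z j) = L (y j)"
  then obtain p where p: "rp p" "s (p 0) = s (y i)" "\<forall>m. L (p m) = L (z (i + int m))"
    using Q unfolding Qw_def by auto
  have yy: "\<And>i. y i \<in> E \<and> t (y i) = s (y (i+1))" using y XH_iff by auto
  have "p 0 = y i"
    using rrD[of "p 0" "y i"] p yy ag[rule_format, of i] unfolding rp_def by auto
  moreover have "rp (\<lambda>k. p (Suc k))" using p(1) unfolding rp_def by auto
  moreover have "\<forall>m. L (p (Suc m)) = L (z (i + 1 + int m))" using p(3) by (simp add: add.assoc)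
  moreover have "s (p (Suc 0)) = s (y (i + 1))" using p(1) yy \<open>p 0 = y i\<close> unfolding rp_def by metis
  ultimately show "\<exists>p. rp p \<and> s (p 0) = s (y (i + 1)) \<and> (\<forall>m. L (p m) = L (z (i + 1 + int m)))"
    by blast
qed

lemma Qw_mono:
  assumes y: "y \<in> XH" and Q: "Qw y i n" shows "Qw y (i + int m) (n + m)"
proof (induction m)
  case 0 then show ?case using Q by simp
next
  case (Suc m)
  have eq: "i + int (Suc m) = (i + int m) + 1" by simp
  have "Qw y ((i + int m) + 1) (Suc (n+m))" by (rule Qw_step[OF y Suc])
  then show ?case by (simp only: eq add_Suc_right)
qed

lemma Qw_reg:
  assumes y: "y \<in> XH" and Q: "\<forall>i. \<exists>n. Qw y i n" shows "y \<in> regular_rays E s t L"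
proof -
  have yy: "\<And>i. y i \<in> E \<and> t (y i) = s (y (i+1))" using y XH_iff by auto
  have "lab L ` left_asym XH y = left_asym Y (lab L y)"
  proof
    show "lab L ` left_asym XH y \<subseteq> left_asym Y (lab L y)"
      unfolding left_asym_def sofic_def lab_def by fastforce
  next
    show "left_asym Y (lab L y) \<subseteq> lab L ` left_asym XH y"
    proof
      fix y' assume "y' \<in> left_asym Y (lab L y)"
      then obtain z N where z: "z \<in> XH" "y' = lab L z" and ag: "\<forall>i\<le>N. y' i = L (y i)"
        unfolding left_asym_def sofic_def lab_def by auto
      obtain n where "Qw y (N+1) n" using Q by blast
      moreover have "\<forall>j. N + 1 - int n \<le> j \<and> j < N + 1 \<longrightarrow> L (z j) = L (y j)"
        using ag z(2) unfolding lab_def by auto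
      ultimately obtain p where p: "rp p" "s (p 0) = s (y (N+1))" "\<forall>m. L (p m) = L (z (N + 1 + int m))"
        using z(1) unfolding Qw_def by blast
      define z' where "z' = (\<lambda>j. if j \<le> N then y j else p (nat (j - N - 1)))"
      have "z' \<in> XH" unfolding XH_iff
      proof
        fix i
        consider "i < N" | "i = N" | "i > N" by linarith
        then show "z' i \<in> E \<and> t (z' i) = s (z' (i + 1))"
        proof cases
          case 1 then show ?thesis using yy unfolding z'_def by auto
        next
          case 2 then show ?thesis using yy p unfolding z'_def by auto
        next
          case 3
          then have "nat (i + 1 - N - 1) = Suc (nat (i - N - 1))" by simp
          then show ?thesis using p(1) 3 unfolding z'_def rp_def by auto
        qed
      qed
      moreover have "lab L z' = y'"
      proof
        fix j
        show "lab L z' j = y' j"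
        proof (cases "j \<le> N")
          case True then show ?thesis using ag unfolding z'_def lab_def by auto
        next
          case False
          then have "N + 1 + int (nat (j - N - 1)) = j" by simp
          then show ?thesis using False p(3) z(2) unfolding z'_def lab_def by metis
        qed
      qed
      moreover have "\<forall>i\<le>N. z' i = y i" unfolding z'_def by auto
      ultimately show "y' \<in> lab L ` left_asym XH y" unfolding left_asym_def by blast
    qed
  qed
  then show ?thesis unfolding regular_rays_def regular_ray_def using y by blast
qed

lemma construct:
  assumes reg: "regular_graph V E s t L" and x: "x \<in> XH"
  shows "\<exists>y\<in>regular_rays E s t L. \<forall>i\<ge>a. y i = x i"
proof -
  have "\<forall>u\<in>V. \<exists>z0. z0 \<in> XH \<and> t (z0 (-1)) = u \<and> follower_vertex E s t L u = follower_seq Y (lab L z0)"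
    using reg unfolding regular_graph_def regular_vertex_def by blast
  then obtain Z where Z: "\<And>u. u\<in>V \<Longrightarrow> Z u \<in> XH \<and> t (Z u (-1)) = u \<and>
      follower_vertex E s t L u = follower_seq Y (lab L (Z u))" by metis
  define W where "W = (\<lambda>u m. \<forall>z\<in>XH. (\<forall>j. - int m \<le> j \<and> j < 0 \<longrightarrow> L (z j) = L (Z u j)) \<longrightarrow>
      (\<exists>p. rp p \<and> s (p 0) = u \<and> (\<forall>k. L (p k) = L (z (int k)))))"
  have "\<forall>u\<in>V. \<exists>n. \<forall>m\<ge>n. W u m"
  proof
    fix u assume "u \<in> V"
    then have "Z u \<in> XH" "follower_seq Y (lab L (Z u)) \<subseteq> follower_vertex E s t L u" using Z by auto
    from locality[OF this] show "\<exists>n. \<forall>m\<ge>n. W u m" unfolding W_def by blast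
  qed
  then obtain nf where nf: "\<And>u m. u\<in>V \<Longrightarrow> nf u \<le> m \<Longrightarrow> W u m" by metis
  define N where "N = Suc (Max (nf ` V))"
  have WN: "W u N" if "u \<in> V" for u
  proof -
    have "nf u \<le> Max (nf ` V)" using Max_ge[OF finite_imageI[OF finV]] that by blast
    then show ?thesis using nf[OF that] N_def by simp
  qed
  have N1: "1 \<le> N" unfolding N_def by simp
  define useq where "useq = rec_nat (s (x a)) (\<lambda>k u. s (Z u (- int N)))"
  have u0: "useq 0 = s (x a)" and uS: "\<And>k. useq (Suc k) = s (Z (useq k) (- int N))"
    unfolding useq_def by simp_all
  have xx: "\<And>i. x i \<in> E \<and> t (x i) = s (x (i+1))" using x XH_iff by auto
  have uV: "useq k \<in> V" for k
  proof (induction k)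
    case 0 then show ?case using u0 xx sV by simp
  next
    case (Suc k) then show ?case using uS Z XH_iff sV by metis
  qed
  have ZX: "Z (useq k) i \<in> E \<and> t (Z (useq k) i) = s (Z (useq k) (i+1))" for k i
    using Z[OF uV] XH_iff by auto
  have Zt: "t (Z (useq k) (-1)) = useq k" for k using Z[OF uV] by auto
  define y where "y = (\<lambda>j. if a \<le> j then x j else
      Z (useq (nat ((a-1-j) div int N))) (j - a + int (nat ((a-1-j) div int N)) * int N))"
  have yblk: "y (a - int k * int N + d) = Z (useq k) d" if d: "- int N \<le> d" "d \<le> -1" for k d
  proof -
    have e1: "a - 1 - (a - int k * int N + d) = (-d-1) + int k * int N" by simp
    have "((-d-1) + int k * int N) div int N = int k + (-d-1) div int N"
      using N1 by (intro div_mult_self1) simp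
    also have "(-d-1) div int N = 0" using d by (intro div_pos_pos_trivial) auto
    finally have "(a - 1 - (a - int k * int N + d)) div int N = int k" unfolding e1 by simp
    moreover have h: "0 \<le> int k * int N" by simp
    moreover have "\<not> int k * int N \<le> d" using d h by linarith
    moreover have "\<not> a \<le> a - int k * int N + d" using d h by linarith
    ultimately show ?thesis unfolding y_def using d by simp
  qed
  have ydec: "\<exists>k d. - int N \<le> d \<and> d \<le> -1 \<and> j = a - int k * int N + d" if j: "j < a" for j
  proof -
    define q where "q = (a-1-j) div int N"
    define r where "r = (a-1-j) mod int N"
    have "a-1-j = q * int N + r" unfolding q_def r_def by simp
    moreover have "0 \<le> r" "r < int N" unfolding r_def using N1 by auto
    moreover have "0 \<le> q" unfolding q_def using N1 j by (simp add: pos_imp_zdiv_nonneg_iff)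
    ultimately show ?thesis
      by (intro exI[of _ "nat q"] exI[of _ "-1-r"]) auto
  qed
  have yx: "a \<le> j \<Longrightarrow> y j = x j" for j unfolding y_def by simp
  have sy: "s (y (a - int k * int N)) = useq k" for k
  proof (cases k)
    case 0 then show ?thesis using yx u0 by simp
  next
    case (Suc k')
    have "a - int k * int N = a - int k' * int N + (- int N)" using Suc by (simp add: algebra_simps)
    moreover have "y (a - int k' * int N + (- int N)) = Z (useq k') (- int N)" using yblk[of "- int N" k'] N1 by simp
    ultimately show ?thesis using uS Suc by metis
  qed
  have yX: "y \<in> XH" unfolding XH_iff
  proof
    fix j
    show "y j \<in> E \<and> t (y j) = s (y (j + 1))"
    proof (cases "a \<le> j")
      case True then show ?thesis using yx xx by simp
    next
      case False
      then obtain k d where kd: "- int N \<le> d" "d \<le> -1" "j = a - int k * int N + d" using ydec[of j] False by auto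
      have yj: "y j = Z (useq k) d" using yblk kd by simp
      show ?thesis
      proof (cases "d = -1")
        case False
        have e: "j + 1 = a - int k * int N + (d+1)" using kd by simp
        have "y (a - int k * int N + (d+1)) = Z (useq k) (d+1)" by (rule yblk) (use kd False in auto)
        then have "y (j+1) = Z (useq k) (d+1)" unfolding e .
        then show ?thesis using yj ZX by simp
      next
        case True
        then have "j + 1 = a - int k * int N" using kd by simp
        then show ?thesis using yj ZX Zt sy True by simp
      qed
    qed
  qed
  have yQ: "Qw y (a - int k * int N) N" for k
    unfolding Qw_def
  proof (intro ballI impI)
    fix z assume z: "z \<in> XH" and ag: "\<forall>j. a - int k * int N - int N \<le> j \<and> j < a - int k * int N \<longrightarrow> L (z j) = L (y j)"
    define c where "c = a - int k * int N"
    define z' where "z' = (\<lambda>j. z (j + c))"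
    have zz: "\<And>i. z i \<in> E \<and> t (z i) = s (z (i+1))" using z XH_iff by auto
    have "z' \<in> XH" unfolding XH_iff z'_def
    proof
      fix i show "z (i + c) \<in> E \<and> t (z (i + c)) = s (z (i + 1 + c))"
        using zz[of "i+c"] by (simp add: algebra_simps)
    qed
    moreover have "\<forall>j. - int N \<le> j \<and> j < 0 \<longrightarrow> L (z' j) = L (Z (useq k) j)"
    proof (intro allI impI)
      fix j assume "- int N \<le> j \<and> j < 0"
      then show "L (z' j) = L (Z (useq k) j)"
        using ag[rule_format, of "j + c"] yblk[of j k] unfolding z'_def c_def by (simp add: algebra_simps)
    qed
    ultimately obtain p where p: "rp p" "s (p 0) = useq k" "\<forall>m. L (p m) = L (z' (int m))"
      using WN[OF uV] unfolding W_def by blast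
    show "\<exists>p. rp p \<and> s (p 0) = s (y (a - int k * int N)) \<and> (\<forall>m. L (p m) = L (z (a - int k * int N + int m)))"
      using p sy unfolding z'_def c_def by (metis add.commute)
  qed
  have "\<forall>i. \<exists>n. Qw y i n"
  proof
    fix i
    define k where "k = nat (a - i)"
    have "int k * 1 \<le> int k * int N" using N1 by (intro mult_left_mono) auto
    then have le: "a - int k * int N \<le> i" unfolding k_def by linarith
    have "Qw y (a - int k * int N + int (nat (i - (a - int k * int N)))) (N + nat (i - (a - int k * int N)))"
      by (rule Qw_mono[OF yX yQ])
    then show "\<exists>n. Qw y i n" using le by auto
  qed
  then have "y \<in> regular_rays E s t L" using Qw_reg yX by blast
  then show ?thesis using yx by blast
qed

lemma ray_vertex:
  assumes yR: "y \<in> regular_rays E s t L"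
  shows "follower_vertex E s t L (s (y 0)) = follower_seq Y (lab L y)"
proof -
  have y: "y \<in> XH" and rg: "regular_ray E s t L y" using yR unfolding regular_rays_def by auto
  have yy: "\<And>i. y i \<in> E \<and> t (y i) = s (y (i+1))" using y XH_iff by auto
  show ?thesis
  proof
    show "follower_vertex E s t L (s (y 0)) \<subseteq> follower_seq Y (lab L y)"
    proof
      fix w assume "w \<in> follower_vertex E s t L (s (y 0))"
      then obtain p where p: "rp p" "s (p 0) = s (y 0)" and w: "w = (\<lambda>n. L (p n))" unfolding fv_iff by blast
      define q where "q = (\<lambda>j. if j < 0 then y j else p (nat j))"
      have "t (y (-1)) = s (p 0)" using yy[of "-1"] p by simp
      then have qX: "q \<in> XH" unfolding q_def using glue_point[of y p] yy p by auto
      have lq: "lab L q = glue (lab L y) w"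
        unfolding lab_def glue_def q_def w by auto
      have "lab L q \<in> Y" unfolding sofic_def using qX by blast
      moreover have "w = (\<lambda>n. lab L q (int n))" unfolding lq glue_def by auto
      ultimately have "w \<in> right_rays Y" unfolding right_rays_def by blast
      then show "w \<in> follower_seq Y (lab L y)"
        unfolding follower_seq_def using lq \<open>lab L q \<in> Y\<close> by simp
    qed
  next
    show "follower_seq Y (lab L y) \<subseteq> follower_vertex E s t L (s (y 0))"
    proof
      fix w assume "w \<in> follower_seq Y (lab L y)"
      then have gY: "glue (lab L y) w \<in> Y" unfolding follower_seq_def by simp
      define g where "g = glue (lab L y) w"
      have "g \<in> left_asym Y (lab L y)" unfolding left_asym_def g_def using gY
        by (intro CollectI conjI exI[of _ "-1"]) (auto simp: glue_def)
      then have "g \<in> lab L ` left_asym XH y" using rg unfolding regular_ray_def by simp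
      then obtain z N where z: "z \<in> XH" "\<forall>i\<le>N. z i = y i" "lab L z = g"
        unfolding left_asym_def by auto
      have zz: "\<And>i. z i \<in> E \<and> t (z i) = s (z (i+1))" using z XH_iff by auto
      have Lz: "L (z i) = L (y i)" if "i < 0" for i
        using z(3) that unfolding g_def glue_def lab_def by (metis)
      have ind: "N + int k \<le> -1 \<longrightarrow> z (N + int k) = y (N + int k)" for k
      proof (induction k)
        case 0 then show ?case using z(2) by simp
      next
        case (Suc k)
        show ?case
        proof
          assume le: "N + int (Suc k) \<le> -1"
          then have eqk: "z (N + int k) = y (N + int k)" using Suc by simp
          have e: "N + int (Suc k) = N + int k + 1" by simp
          have "s (z (N + int (Suc k))) = s (y (N + int (Suc k)))"
            unfolding e using zz[of "N + int k"] yy[of "N + int k"] eqk by simp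
          moreover have "L (z (N + int (Suc k))) = L (y (N + int (Suc k)))" using Lz le by simp
          ultimately show "z (N + int (Suc k)) = y (N + int (Suc k))" using rrD zz yy by blast
        qed
      qed
      have zm1: "z (-1) = y (-1)"
      proof (cases "-1 \<le> N")
        case True then show ?thesis using z(2) by simp
      next
        case False
        then have "N + int (nat (-1 - N)) = -1" by simp
        then show ?thesis using ind[of "nat (-1 - N)"] by simp
      qed
      define p where "p = (\<lambda>n::nat. z (int n))"
      have "rp p" unfolding rp_def p_def using zz by (simp add: add.commute)
      moreover have "s (p 0) = s (y 0)" unfolding p_def using zz[of "-1"] yy[of "-1"] zm1 by simp
      moreover have "w = (\<lambda>n. L (p n))"
      proof
        fix n
        have "L (p n) = g (int n)" using z(3) unfolding p_def lab_def by metis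
        then show "w n = L (p n)" unfolding g_def glue_def by simp
      qed
      ultimately show "w \<in> follower_vertex E s t L (s (y 0))" unfolding fv_iff by blast
    qed
  qed
qed

lemma exists_point:
  assumes v: "v \<in> V" shows "\<exists>x\<in>XH. s (x 0) = v"
proof -
  obtain e0 where e0: "e0 \<in> E" "s e0 = v" using outE[OF v] by blast
  obtain f0 where f0: "f0 \<in> E" "t f0 = v" using inE[OF v] by blast
  have "\<forall>e\<in>E. \<exists>e'. e'\<in>E \<and> s e' = t e" using outE tV by blast
  then obtain nx where nx: "\<And>e. e\<in>E \<Longrightarrow> nx e \<in> E \<and> s (nx e) = t e" by metis
  have "\<forall>e\<in>E. \<exists>e'. e'\<in>E \<and> t e' = s e" using inE sV by blast
  then obtain pv where pv: "\<And>e. e\<in>E \<Longrightarrow> pv e \<in> E \<and> t (pv e) = s e" by metis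
  define R where "R = rec_nat e0 (\<lambda>n e. nx e)"
  define Q where "Q = rec_nat f0 (\<lambda>n e. pv e)"
  have R0: "R 0 = e0" and RS: "\<And>n. R (Suc n) = nx (R n)" unfolding R_def by simp_all
  have Q0: "Q 0 = f0" and QS: "\<And>n. Q (Suc n) = pv (Q n)" unfolding Q_def by simp_all
  have RE: "R n \<in> E" for n by (induction n) (use R0 RS e0 nx in auto)
  have QE: "Q n \<in> E" for n by (induction n) (use Q0 QS f0 pv in auto)
  define l where "l = (\<lambda>j::int. Q (nat (-j-1)))"
  have l1: "\<forall>j<0. l j \<in> E" unfolding l_def using QE by simp
  have l2: "\<forall>j< -1. t (l j) = s (l (j+1))"
  proof (intro allI impI)
    fix j :: int assume "j < -1"
    then have "nat (-j-1) = Suc (nat (-(j+1)-1))" by simp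
    then show "t (l j) = s (l (j+1))" unfolding l_def using QS QE pv by metis
  qed
  have "rp R" unfolding rp_def using RE RS nx by auto
  moreover have "t (l (-1)) = s (R 0)" unfolding l_def using Q0 R0 e0 f0 by simp
  ultimately have "(\<lambda>j. if j < 0 then l j else R (nat j)) \<in> XH" using glue_point l1 l2 by blast
  then show ?thesis using R0 e0 by (intro bexI) auto
qed

lemma topspace_shift: "topspace (shift_topology E) = {x. \<forall>i. x i \<in> E}"
  unfolding shift_topology_def by (auto simp: PiE_UNIV_domain)

lemma dense_of_reg:
  assumes reg: "regular_graph V E s t L"
  shows "dense_in_shift E XH (regular_rays E s t L)"
  unfolding dense_in_shift_def
proof (intro conjI)
  show "regular_rays E s t L \<subseteq> XH" unfolding regular_rays_def by auto
  have XT: "XH \<subseteq> topspace (shift_topology E)" unfolding topspace_shift using XH_iff by auto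
  show "subtopology (shift_topology E) XH closure_of regular_rays E s t L = XH"
  proof
    show "subtopology (shift_topology E) XH closure_of regular_rays E s t L \<subseteq> XH"
      using closure_of_subset_topspace by fastforce
  next
    show "XH \<subseteq> subtopology (shift_topology E) XH closure_of regular_rays E s t L"
    proof
      fix x assume x: "x \<in> XH"
      show "x \<in> subtopology (shift_topology E) XH closure_of regular_rays E s t L"
        unfolding in_closure_of
      proof (intro conjI allI impI)
        show "x \<in> topspace (subtopology (shift_topology E) XH)" using x XT by auto
        fix T assume "x \<in> T \<and> openin (subtopology (shift_topology E) XH) T"
        then obtain U where U: "openin (shift_topology E) U" "T = U \<inter> XH" and xT: "x \<in> T"
          unfolding openin_subtopology by blast
        have "x \<in> U" using xT U by auto
        then obtain Us where Us: "finite {i. Us i \<noteq> E}" "x \<in> Pi\<^sub>E UNIV Us" "Pi\<^sub>E UNIV Us \<subseteq> U"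
          using U(1) unfolding shift_topology_def openin_product_topology_alt by auto
        define a where "a = Min (insert 0 {i. Us i \<noteq> E})"
        have aJ: "a \<le> i" if "Us i \<noteq> E" for i unfolding a_def using Us(1) that by (intro Min_le) auto
        obtain y where y: "y \<in> regular_rays E s t L" "\<forall>i\<ge>a. y i = x i"
          using construct[OF reg x] by blast
        have yX: "y \<in> XH" using y(1) unfolding regular_rays_def by auto
        have "y \<in> Pi\<^sub>E UNIV Us"
        proof -
          have "y i \<in> Us i" for i
          proof (cases "Us i = E")
            case True then show ?thesis using yX XH_iff by auto
          next
            case False then show ?thesis using aJ y(2) Us(2) by (auto simp: PiE_UNIV_domain)
          qed
          then show ?thesis by (auto simp: PiE_UNIV_domain)
        qed
        then have "y \<in> T" using Us(3) U(2) yX by auto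
        then show "\<exists>y. y \<in> regular_rays E s t L \<and> y \<in> T" using y(1) by blast
      qed
    qed
  qed
qed

lemma reg_of_dense:
  assumes d: "dense_in_shift E XH (regular_rays E s t L)"
  shows "regular_graph V E s t L"
  unfolding regular_graph_def
proof
  fix v assume v: "v \<in> V"
  obtain x where x: "x \<in> XH" "s (x 0) = v" using exists_point[OF v] by blast
  define T where "T = {y \<in> topspace (shift_topology E). y 0 \<in> {x 0}} \<inter> XH"
  have cm: "continuous_map (product_topology (\<lambda>_. discrete_topology E) UNIV) (discrete_topology E) (\<lambda>y. y (0::int))"
    by (rule continuous_map_product_projection) simp
  have x0E: "x 0 \<in> E" using x(1) unfolding XH_iff by blast
  have op: "openin (discrete_topology E) {x 0}" using x0E by simp
  have "openin (shift_topology E) {y \<in> topspace (shift_topology E). y 0 \<in> {x 0}}"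
    unfolding shift_topology_def by (rule openin_continuous_map_preimage[OF cm op])
  then have oT: "openin (subtopology (shift_topology E) XH) T" unfolding T_def openin_subtopology by blast
  have XT: "XH \<subseteq> topspace (shift_topology E)" unfolding topspace_shift using XH_iff by auto
  have xT: "x \<in> T" unfolding T_def using x XT by auto
  have cl: "subtopology (shift_topology E) XH closure_of regular_rays E s t L = XH"
    using d unfolding dense_in_shift_def by blast
  have "x \<in> subtopology (shift_topology E) XH closure_of regular_rays E s t L"
    unfolding cl by (rule x(1))
  then have H: "\<forall>T. x \<in> T \<and> openin (subtopology (shift_topology E) XH) T \<longrightarrow> (\<exists>y. y \<in> regular_rays E s t L \<and> y \<in> T)"
    unfolding in_closure_of by (rule conjunct2)
  obtain y where y: "y \<in> regular_rays E s t L" "y \<in> T"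
    using H[rule_format, OF conjI[OF xT oT]] by blast
  have yX: "y \<in> XH" using y(1) unfolding regular_rays_def by auto
  have sy: "s (y 0) = v" using y(2) x unfolding T_def by auto
  have "t (y (-1)) = s (y (-1 + 1))" using yX unfolding XH_iff by blast
  then have tv: "t (y (-1)) = v" using sy by simp
  have fq: "follower_vertex E s t L v = follower_seq Y (lab L y)" using ray_vertex[OF y(1)] sy by simp
  show "regular_vertex E s t L v" unfolding regular_vertex_def
    by (rule bexI[of _ y]) (use tv fq yX in auto)
qed
end

theorem lemma3p11:
  fixes V :: "'v set" and E :: "'e set" and s t :: "'e \<Rightarrow> 'v" and L :: "'e \<Rightarrow> 'a"
  assumes "labeled_graph V E s t"
    and "right_resolving E s L"
  shows "regular_graph V E s t L \<longleftrightarrow>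
           dense_in_shift E (edge_shift E s t) (regular_rays E s t L)"
proof -
  interpret LG V E s t L using assms by unfold_locales
  show ?thesis using dense_of_reg reg_of_dense by blast
qed

end
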